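(* Let $\mathbf b_i\in\mathcal B_k$ be an interior point of $P(A)$. Let $\beta_1,\dots,\beta_{R_k}$ be the elements of $\{1/\ell_0,2/\ell_0,\dots,\ell_0/\ell_0\}$ not of the form $1-s_0^{(j)}/\ell_0$ with $\mathbf b_j\in\mathcal B_k$ a boundary point of $P(A)$ (one may take $\beta_1=1$), and let $\alpha_1,\dots,\alpha_{R_k}$ be the elements remaining on the list $\frac{v^{(i)}_r+\sigma}{\ell_r}$ ($r=1,\dots,m$, $\sigma=0,\dots,\ell_r-1$) after one copy of each element $1-s_0^{(j)}/\ell_0$ with $\mathbf b_j\in\mathcal B_k$ a boundary point of $P(A)$ has been removed. Then the $R_k$ series $F^{(\mathbf b_j)}_{\mathbf b_i}(\lambda)$ with $\mathbf b_j\in\mathcal B_k$ an interior point of $P(A)$ are obtained from a full set of solutions at $x=0$ of the hypergeometric operator \[(\delta_x+\beta_1-1)\cdots(\delta_x+\beta_{R_k}-1)-x(\delta_x+\alpha_1)\cdots(\delta_x+\alpha_{R_k}),\qquad\delta_x=x\tfrac{d}{dx},\] by replacing $x$ by $\lambda^{\ell_0}$; that is, $F^{(\mathbf b_j)}_{\mathbf b_i}(\lambda)=H_j(\lambda^{\ell_0})$ where the $H_j(x)$ (formal series in $x^{s_0^{(j)}/\ell_0}\mathbb C[[x]]$) form a full set of solutions of this operator at $x=0$.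
   Context: Let $A=\{\mathbf a_1,\dots,\mathbf a_m\}\subseteq\mathbb Z^n$ be linearly independent over $\mathbb R$, $\mathbf a_0\in\mathbb Z^n$, and $\ell_0,\dots,\ell_m$ positive integers with gcd $1$, $\ell_0\mathbf a_0=\sum_{j=1}^m\ell_j\mathbf a_j$, $\ell_0=\sum_{j=1}^m\ell_j$. Let $\mathbb ZA$, $\mathbb ZA_+$ be the groups generated by $A$ and $A\cup\{\mathbf a_0\}$. Let $V$ be the real span of $A$, $V_{\mathbb Z}=V\cap\mathbb Z^n$, $P(A)=\{\sum_jc_j\mathbf a_j:0\le c_j<1\}$, $\mathcal B=V_{\mathbb Z}\cap P(A)$. Each $\mathbf b\in\mathcal B$ is written uniquely $\mathbf b=\sum_rv_r\mathbf a_r$ with $v_r\in[0,1)$; $\mathbf b$ is an interior point of $P(A)$ if all $v_r>0$ and a boundary point otherwise. Fix a coset $\mathcal C_k$ of $\mathbb ZA_+$ in $V_{\mathbb Z}$, put $\mathcal B_k=\mathcal B\cap\mathcal C_k$ (it has $\ell_0$ elements), and let $R_k$ be the number of interior points of $P(A)$ in $\mathcal B_k$. Fix $\mathbf b_i\in\mathcal B_k$. For $\mathbf b_j\in\mathcal B_k$ write $\mathbf b_j=\sum_rv^{(j)}_r\mathbf a_r$, let $s_0^{(j)}\in\{0,\dots,\ell_0-1\}$ be the unique element with $\mathbf b_i+s_0^{(j)}\mathbf a_0\equiv\mathbf b_j\pmod{\mathbb ZA}$, and let $s^{(j)}_r\in\mathbb Z$ ($r=1,\dots,m$) be determined by $\mathbf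 b_i+s_0^{(j)}\mathbf a_0=\mathbf b_j-\sum_rs^{(j)}_r\mathbf a_r$. Define \[F^{(\mathbf b_j)}_{\mathbf b_i}(\lambda)=\lambda^{s_0^{(j)}}\sum_{s=0}^\infty\frac{\prod_{r=1}^m\prod_{\sigma=0}^{\ell_r-1}\big(\frac{v^{(j)}_r-s^{(j)}_r+\sigma}{\ell_r}\big)_s}{\prod_{t=1}^{\ell_0}\big(\frac{s^{(j)}_0+t}{\ell_0}\big)_s}\lambda^{s\ell_0},\] with $(a)_s=a(a+1)\cdots(a+s-1)$. *)

theory Defs
  imports "HOL-Analysis.Analysis" "HOL-Computational_Algebra.Formal_Power_Series"
    "HOL-Library.Multiset"
begin

text \<open>Vectors of Z^n are modelled as integer-coordinate vectors in real^'n.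
  The family A = {a_1,...,a_m} is a function a on indices 1..m; the weights
  l_0,...,l_m are a function l :: nat => nat.\<close>

definition intvecs :: "(real^'n) set" where
  "intvecs = {x. \<forall>i. x $ i \<in> \<int>}"

definition latZ :: "nat \<Rightarrow> (nat \<Rightarrow> real^'n) \<Rightarrow> (real^'n) set" where
  "latZ m a = {(\<Sum>j=1..m. of_int (k j) *\<^sub>R a j) | k. True}"

definition latZplus :: "nat \<Rightarrow> (nat \<Rightarrow> real^'n) \<Rightarrow> real^'n \<Rightarrow> (real^'n) set" where
  "latZplus m a a0 = {z + of_int k0 *\<^sub>R a0 | z k0. z \<in> latZ m a}"

definition VZ :: "nat \<Rightarrow> (nat \<Rightarrow> real^'n) \<Rightarrow> (real^'n) set" where
  "VZ m a = span (a ` {1..m}) \<inter> intvecs"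

definition parallelepiped :: "nat \<Rightarrow> (nat \<Rightarrow> real^'n) \<Rightarrow> (real^'n) set" where
  "parallelepiped m a =
     {(\<Sum>j=1..m. c j *\<^sub>R a j) | c. \<forall>j\<in>{1..m}. 0 \<le> c j \<and> c j < 1}"

definition Bset :: "nat \<Rightarrow> (nat \<Rightarrow> real^'n) \<Rightarrow> (real^'n) set" where
  "Bset m a = VZ m a \<inter> parallelepiped m a"

definition is_coset :: "nat \<Rightarrow> (nat \<Rightarrow> real^'n) \<Rightarrow> real^'n \<Rightarrow> (real^'n) set \<Rightarrow> bool" where
  "is_coset m a a0 C \<longleftrightarrow> (\<exists>b\<in>VZ m a. C = (\<lambda>z. b + z) ` latZplus m a a0)"

definition coords :: "nat \<Rightarrow> (nat \<Rightarrow> real^'n) \<Rightarrow> real^'n \<Rightarrow> nat \<Rightarrow> real" where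
  "coords m a b = (THE v. (\<forall>r. r \<notin> {1..m} \<longrightarrow> v r = 0) \<and> b = (\<Sum>r=1..m. v r *\<^sub>R a r))"

definition interior_pt :: "nat \<Rightarrow> (nat \<Rightarrow> real^'n) \<Rightarrow> real^'n \<Rightarrow> bool" where
  "interior_pt m a b \<longleftrightarrow> (\<forall>r\<in>{1..m}. coords m a b r > 0)"

definition s0 :: "nat \<Rightarrow> (nat \<Rightarrow> real^'n) \<Rightarrow> real^'n \<Rightarrow> nat \<Rightarrow> real^'n \<Rightarrow> real^'n \<Rightarrow> nat" where
  "s0 m a a0 l0 bi bj = (THE s. s < l0 \<and> bj - (bi + of_nat s *\<^sub>R a0) \<in> latZ m a)"

definition svec :: "nat \<Rightarrow> (nat \<Rightarrow> real^'n) \<Rightarrow> real^'n \<Rightarrow> nat \<Rightarrow> real^'n \<Rightarrow> real^'n \<Rightarrow> nat \<Rightarrow> int" where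
  "svec m a a0 l0 bi bj = (THE s. (\<forall>r. r \<notin> {1..m} \<longrightarrow> s r = 0) \<and>
      bi + of_nat (s0 m a a0 l0 bi bj) *\<^sub>R a0 = bj - (\<Sum>r=1..m. of_int (s r) *\<^sub>R a r))"

text \<open>The s-th coefficient of the series F (coefficient of lambda^(s0 + s l0)).\<close>
definition Fcoeff :: "nat \<Rightarrow> (nat \<Rightarrow> real^'n) \<Rightarrow> real^'n \<Rightarrow> (nat \<Rightarrow> nat) \<Rightarrow> real^'n \<Rightarrow> real^'n \<Rightarrow> nat \<Rightarrow> complex" where
  "Fcoeff m a a0 l bi bj s =
     (\<Prod>r=1..m. \<Prod>\<sigma><l r. pochhammer
        (complex_of_real ((coords m a bj r - of_int (svec m a a0 (l 0) bi bj r) + of_nat \<sigma>) / of_nat (l r))) s)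
     / (\<Prod>t=1..l 0. pochhammer
        (complex_of_real ((of_nat (s0 m a a0 (l 0) bi bj) + of_nat t) / of_nat (l 0))) s)"

definition Fseries :: "nat \<Rightarrow> (nat \<Rightarrow> real^'n) \<Rightarrow> real^'n \<Rightarrow> (nat \<Rightarrow> nat) \<Rightarrow> real^'n \<Rightarrow> real^'n \<Rightarrow> complex fps" where
  "Fseries m a a0 l bi bj =
     fps_X ^ s0 m a a0 (l 0) bi bj * fps_compose (Abs_fps (Fcoeff m a a0 l bi bj)) (fps_X ^ l 0)"

text \<open>The set {beta_1,...,beta_{R_k}} (elements are distinct).\<close>
definition Beta :: "nat \<Rightarrow> (nat \<Rightarrow> real^'n) \<Rightarrow> real^'n \<Rightarrow> nat \<Rightarrow> (real^'n) set \<Rightarrow> real^'n \<Rightarrow> real set" where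
  "Beta m a a0 l0 Bk bi =
     {of_nat t / of_nat l0 | t. t \<in> {1..l0}}
     - {1 - of_nat (s0 m a a0 l0 bi bj) / of_nat l0 | bj. bj \<in> Bk \<and> \<not> interior_pt m a bj}"

definition Alpha :: "nat \<Rightarrow> (nat \<Rightarrow> real^'n) \<Rightarrow> real^'n \<Rightarrow> (nat \<Rightarrow> nat) \<Rightarrow> (real^'n) set \<Rightarrow> real^'n \<Rightarrow> real multiset" where
  "Alpha m a a0 l Bk bi =
     (\<Sum>r\<in>{1..m}. mset (map (\<lambda>\<sigma>. (coords m a bi r + of_nat \<sigma>) / of_nat (l r)) [0..<l r]))
     - mset_set {1 - of_nat (s0 m a a0 (l 0) bi bj) / of_nat (l 0) | bj. bj \<in> Bk \<and> \<not> interior_pt m a bj}"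

text \<open>Generalized formal series sum_q h(q) x^q, represented by the coefficient function
  h :: real => complex, whose support lies in finitely many sets gamma + N.\<close>
definition gen_series :: "(real \<Rightarrow> complex) \<Rightarrow> bool" where
  "gen_series h \<longleftrightarrow> (\<exists>\<Gamma>. finite \<Gamma> \<and> (\<forall>q. h q \<noteq> 0 \<longrightarrow> (\<exists>\<gamma>\<in>\<Gamma>. \<exists>n::nat. q = \<gamma> + of_nat n)))"

text \<open>Coefficient of x^q in
  (delta+beta_1-1)...(delta+beta_R-1) h - x (delta+alpha_1)...(delta+alpha_R) h,
  delta = x d/dx acting by delta x^q = q x^q.\<close>
definition hyp_op :: "real set \<Rightarrow> real multiset \<Rightarrow> (real \<Rightarrow> complex) \<Rightarrow> real \<Rightarrow> complex" where
  "hyp_op Be Al h q =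
     (\<Prod>\<beta>\<in>Be. complex_of_real (q + \<beta> - 1)) * h q
     - prod_mset (image_mset (\<lambda>\<alpha>. complex_of_real (q - 1 + \<alpha>)) Al) * h (q - 1)"

end

theory Submission
  imports Defs
begin

locale S6 =
  fixes a :: "nat \<Rightarrow> real^'n" and a0 :: "real^'n" and l :: "nat \<Rightarrow> nat" and m :: nat
    and C :: "(real^'n) set" and bi :: "real^'n"
  assumes aint: "\<forall>j\<in>{1..m}. a j \<in> intvecs" and a0int: "a0 \<in> intvecs"
    and inj: "inj_on a {1..m}" and indep: "independent (a ` {1..m})"
    and lpos: "\<forall>j\<le>m. l j > 0" and lgcd: "Gcd (l ` {0..m}) = 1"
    and rel: "of_nat (l 0) *\<^sub>R a0 = (\<Sum>j=1..m. of_nat (l j) *\<^sub>R a j)"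
    and lsum: "l 0 = (\<Sum>j=1..m. l j)"
    and coset: "is_coset m a a0 C"
    and bi_in: "bi \<in> Bset m a \<inter> C" and bi_int: "interior_pt m a bi"
begin

lemma l0pos: "l 0 > 0" using lpos by auto
lemma lrpos: "r \<in> {1..m} \<Longrightarrow> l r > 0" using lpos by auto

lemma coord_zero:
  assumes "(\<Sum>r=1..m. x r *\<^sub>R a r) = 0" "r \<in> {1..m}"
  shows "x r = 0"
proof -
  define u where "u v = x (inv_into {1..m} a v)" for v
  have "(\<Sum>v\<in>a ` {1..m}. u v *\<^sub>R v) = (\<Sum>r=1..m. u (a r) *\<^sub>R a r)"
    by (rule sum.reindex[OF inj, unfolded comp_def])
  also have "\<dots> = (\<Sum>r=1..m. x r *\<^sub>R a r)"
    apply (rule sum.cong[OF refl])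
    subgoal for r using inv_into_f_f[OF inj, of r] by (simp add: u_def)
    done
  finally have "(\<Sum>v\<in>a ` {1..m}. u v *\<^sub>R v) = 0" using assms(1) by simp
  then have "u (a r) = 0"
    by (intro real_vector.independentD[OF indep]) (use assms(2) in auto)
  then show ?thesis using assms(2) inv_into_f_f[OF inj, of r] by (simp add: u_def)
qed

lemma coord_unique:
  assumes "(\<Sum>r=1..m. x r *\<^sub>R a r) = (\<Sum>r=1..m. y r *\<^sub>R a r)" "r \<in> {1..m}"
  shows "x r = y r"
proof -
  have "(\<Sum>r=1..m. (x r - y r) *\<^sub>R a r) = 0"
    using assms(1) by (simp add: scaleR_diff_left sum_subtractf)
  from coord_zero[OF this assms(2)] show ?thesis by simp
qed

lemma sum_in_span: "(\<Sum>r=1..m. x r *\<^sub>R a r) \<in> span (a ` {1..m})"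
  by (intro span_sum span_scale span_base) auto

lemma span_coords_ex:
  assumes "b \<in> span (a ` {1..m})"
  shows "\<exists>x. b = (\<Sum>r=1..m. x r *\<^sub>R a r)"
proof -
  obtain u where u: "b = (\<Sum>v\<in>a ` {1..m}. u v *\<^sub>R v)"
    using assms real_vector.span_finite[of "a ` {1..m}"] by auto
  also have "\<dots> = (\<Sum>r=1..m. u (a r) *\<^sub>R a r)"
    by (rule sum.reindex[OF inj, unfolded comp_def])
  finally show ?thesis by (rule exI[of _ "\<lambda>r. u (a r)"])
qed

lemma coords_prop:
  assumes "b \<in> span (a ` {1..m})"
  shows "(\<forall>r. r \<notin> {1..m} \<longrightarrow> coords m a b r = 0) \<and> b = (\<Sum>r=1..m. coords m a b r *\<^sub>R a r)"
proof -
  obtain x where x: "b = (\<Sum>r=1..m. x r *\<^sub>R a r)" using span_coords_ex[OF assms] by blast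
  define v where "v r = (if r \<in> {1..m} then x r else 0)" for r
  have ex: "(\<forall>r. r \<notin> {1..m} \<longrightarrow> v r = 0) \<and> b = (\<Sum>r=1..m. v r *\<^sub>R a r)"
    unfolding x v_def by (auto intro!: sum.cong)
  define P where "P w \<longleftrightarrow> (\<forall>r. r \<notin> {1..m} \<longrightarrow> w r = 0) \<and> b = (\<Sum>r=1..m. w r *\<^sub>R a r)" for w
  have "(THE w. P w) = v"
  proof (rule the_equality)
    show "P v" using ex by (simp add: P_def)
    fix w assume w: "P w"
    show "w = v"
    proof
      fix r show "w r = v r"
        using w ex coord_unique[of w v r] by (cases "r \<in> {1..m}") (auto simp: P_def)
    qed
  qed
  then have "coords m a b = v" unfolding coords_def P_def by simp
  then show ?thesis using ex by simp
qed

lemma coords_eq: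
  assumes "b = (\<Sum>r=1..m. x r *\<^sub>R a r)" "r \<in> {1..m}"
  shows "coords m a b r = x r"
proof -
  have "b \<in> span (a ` {1..m})" using assms sum_in_span by simp
  from coords_prop[OF this] assms show ?thesis
    using coord_unique[of "coords m a b" x r] by auto
qed

lemma a0_eq: "a0 = (\<Sum>j=1..m. (real (l j) / real (l 0)) *\<^sub>R a j)"
proof -
  have "a0 = (1 / real (l 0)) *\<^sub>R (of_nat (l 0) *\<^sub>R a0)" using l0pos by simp
  also have "\<dots> = (\<Sum>j=1..m. (real (l j) / real (l 0)) *\<^sub>R a j)"
    unfolding rel by (simp add: scaleR_sum_right)
  finally show ?thesis .
qed

lemma a0_span: "a0 \<in> span (a ` {1..m})"
  using a0_eq sum_in_span by metis

end

context S6 begin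

lemma mem_latZ: "x \<in> latZ m a \<longleftrightarrow> (\<exists>k. x = (\<Sum>j=1..m. of_int (k j) *\<^sub>R a j))"
  unfolding latZ_def by auto

lemma latZ_add: "x \<in> latZ m a \<Longrightarrow> y \<in> latZ m a \<Longrightarrow> x + y \<in> latZ m a"
proof -
  assume "x \<in> latZ m a" "y \<in> latZ m a"
  then obtain k k' where "x = (\<Sum>j=1..m. of_int (k j) *\<^sub>R a j)" "y = (\<Sum>j=1..m. of_int (k' j) *\<^sub>R a j)"
    unfolding mem_latZ by blast
  then have "x + y = (\<Sum>j=1..m. of_int (k j + k' j) *\<^sub>R a j)"
    by (simp add: sum.distrib[symmetric] scaleR_add_left)
  then show ?thesis unfolding mem_latZ by (rule exI[of _ "\<lambda>j. k j + k' j"])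
qed

lemma latZ_uminus: "x \<in> latZ m a \<Longrightarrow> - x \<in> latZ m a"
proof -
  assume "x \<in> latZ m a"
  then obtain k where "x = (\<Sum>j=1..m. of_int (k j) *\<^sub>R a j)"
    unfolding mem_latZ by blast
  then have "- x = (\<Sum>j=1..m. of_int (- k j) *\<^sub>R a j)"
    by (simp add: sum_negf[symmetric])
  then show ?thesis unfolding mem_latZ by (rule exI[of _ "\<lambda>j. - k j"])
qed

lemma latZ_diff: "x \<in> latZ m a \<Longrightarrow> y \<in> latZ m a \<Longrightarrow> x - y \<in> latZ m a"
  using latZ_add[OF _ latZ_uminus] by (simp add: diff_conv_add_uminus del: add_uminus_conv_diff)

lemma latZ_mult_a0: "(of_int z * of_nat (l 0)) *\<^sub>R a0 \<in> latZ m a"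
proof -
  have "(of_int z * of_nat (l 0)) *\<^sub>R a0 = of_int z *\<^sub>R (of_nat (l 0) *\<^sub>R a0)" by simp
  also have "\<dots> = (\<Sum>j=1..m. of_int (z * int (l j)) *\<^sub>R a j)"
    unfolding rel by (simp add: scaleR_sum_right)
  finally show ?thesis unfolding mem_latZ by (rule exI[of _ "\<lambda>j. z * int (l j)"])
qed

lemma order_a0:
  assumes "of_int k *\<^sub>R a0 \<in> latZ m a"
  shows "int (l 0) dvd k"
proof -
  obtain kk where kk: "of_int k *\<^sub>R a0 = (\<Sum>j=1..m. of_int (kk j) *\<^sub>R a j)"
    using assms mem_latZ by blast
  have "of_int k *\<^sub>R a0 = (\<Sum>j=1..m. (of_int k * (real (l j) / real (l 0))) *\<^sub>R a j)"
    by (subst a0_eq) (simp add: scaleR_sum_right)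
  then have eq: "of_int (kk j) = of_int k * (real (l j) / real (l 0))" if "j \<in> {1..m}" for j
    using coord_unique[OF _ that, of "\<lambda>j. of_int (kk j)"] kk by simp
  define c where "c = nat \<bar>k\<bar>"
  have "l 0 dvd c * l j" if "j \<in> {0..m}" for j
  proof (cases "j = 0")
    case True then show ?thesis by simp
  next
    case False
    then have j: "j \<in> {1..m}" using that by auto
    have "real_of_int (kk j * int (l 0)) = real_of_int (k * int (l j))"
      using eq[OF j] l0pos by (simp add: field_simps)
    then have "kk j * int (l 0) = k * int (l j)" by linarith
    then have "int (l 0) dvd k * int (l j)" by (metis dvd_triv_right)
    then have "int (l 0) dvd \<bar>k * int (l j)\<bar>" by simp
    moreover have "\<bar>k * int (l j)\<bar> = \<bar>k\<bar> * int (l j)" by (simp add: abs_mult)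
    ultimately have "int (l 0) dvd \<bar>k\<bar> * int (l j)" by simp
    then show ?thesis unfolding c_def
      using int_dvd_int_iff[of "l 0" "nat \<bar>k\<bar> * l j"] by simp
  qed
  then have "l 0 dvd Gcd ((*) c ` (l ` {0..m}))"
    by (auto simp: dvd_Gcd_iff)
  also have "Gcd ((*) c ` (l ` {0..m})) = c" by (simp add: Gcd_mult lgcd)
  finally have "l 0 dvd c" .
  then show ?thesis unfolding c_def using int_dvd_int_iff[of "l 0" "nat \<bar>k\<bar>"] by simp
qed

lemma mem_latZplus: "x \<in> latZplus m a a0 \<longleftrightarrow> (\<exists>z k0. z \<in> latZ m a \<and> x = z + of_int k0 *\<^sub>R a0)"
  unfolding latZplus_def by auto

lemma latZplus_add: "x \<in> latZplus m a a0 \<Longrightarrow> y \<in> latZplus m a a0 \<Longrightarrow> x + y \<in> latZplus m a a0"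
proof -
  assume "x \<in> latZplus m a a0" "y \<in> latZplus m a a0"
  then obtain z k z' k' where "z \<in> latZ m a" "x = z + of_int k *\<^sub>R a0" "z' \<in> latZ m a" "y = z' + of_int k' *\<^sub>R a0"
    unfolding mem_latZplus by blast
  then have "z + z' \<in> latZ m a" "x + y = (z + z') + of_int (k + k') *\<^sub>R a0"
    by (auto simp: latZ_add algebra_simps)
  then show ?thesis unfolding mem_latZplus by blast
qed

lemma latZplus_diff: "x \<in> latZplus m a a0 \<Longrightarrow> y \<in> latZplus m a a0 \<Longrightarrow> x - y \<in> latZplus m a a0"
proof -
  assume "x \<in> latZplus m a a0" "y \<in> latZplus m a a0"
  then obtain z k z' k' where "z \<in> latZ m a" "x = z + of_int k *\<^sub>R a0" "z' \<in> latZ m a" "y = z' + of_int k' *\<^sub>R a0"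
    unfolding mem_latZplus by blast
  then have "z - z' \<in> latZ m a" "x - y = (z - z') + of_int (k - k') *\<^sub>R a0"
    by (auto simp: latZ_diff algebra_simps)
  then show ?thesis unfolding mem_latZplus by blast
qed

lemma latZ_sub_plus: "z \<in> latZ m a \<Longrightarrow> z + of_int k *\<^sub>R a0 \<in> latZplus m a a0"
  unfolding mem_latZplus by blast


end

context S6 begin

abbreviation "S0 bj \<equiv> s0 m a a0 (l 0) bi bj"
abbreviation "SV bj \<equiv> svec m a a0 (l 0) bi bj"
abbreviation "Bk \<equiv> Bset m a \<inter> C"

lemma coset_ex: "\<exists>b0. C = (\<lambda>z. b0 + z) ` latZplus m a a0"
  using coset unfolding is_coset_def by blast

lemma C_diff: "x \<in> C \<Longrightarrow> y \<in> C \<Longrightarrow> x - y \<in> latZplus m a a0"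
  using coset_ex latZplus_diff by auto

lemma C_add: "x \<in> C \<Longrightarrow> z \<in> latZplus m a a0 \<Longrightarrow> x + z \<in> C"
proof -
  assume x: "x \<in> C" and z: "z \<in> latZplus m a a0"
  obtain b0 where C: "C = (\<lambda>z. b0 + z) ` latZplus m a a0" using coset_ex by blast
  then obtain z1 where z1: "z1 \<in> latZplus m a a0" "x = b0 + z1" using x by auto
  have "x + z = b0 + (z1 + z)" using z1 by (simp add: algebra_simps)
  then show ?thesis using C latZplus_add[OF z1(1) z] by auto
qed

lemma bi_C: "bi \<in> C" using bi_in by simp
lemma Bset_span: "b \<in> Bset m a \<Longrightarrow> b \<in> span (a ` {1..m})"
  unfolding Bset_def VZ_def by auto
lemma Bset_para: "b \<in> Bset m a \<Longrightarrow> b \<in> parallelepiped m a"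
  unfolding Bset_def by auto
lemma bi_span: "bi \<in> span (a ` {1..m})" using bi_in Bset_span by auto

definition Ps :: "real^'n \<Rightarrow> nat \<Rightarrow> bool" where
  "Ps bj s \<longleftrightarrow> s < l 0 \<and> bj - (bi + of_nat s *\<^sub>R a0) \<in> latZ m a"

lemma Ps_ex: assumes "bj \<in> C" shows "\<exists>s. Ps bj s"
proof -
  obtain z k0 where z: "z \<in> latZ m a" "bj - bi = z + of_int k0 *\<^sub>R a0"
    using C_diff[OF assms bi_C] unfolding mem_latZplus by blast
  define s where "s = nat (k0 mod int (l 0))"
  have s_int: "int s = k0 mod int (l 0)" unfolding s_def using l0pos by simp
  have "s < l 0" unfolding s_def using l0pos by (simp add: nat_less_iff)
  have k0: "real_of_int k0 = real s + real_of_int (k0 div int (l 0)) * real (l 0)"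
  proof -
    have "k0 = int s + (k0 div int (l 0)) * int (l 0)" using s_int by simp
    then show ?thesis by (metis of_int_add of_int_mult of_int_of_nat_eq)
  qed
  have "bj - (bi + of_nat s *\<^sub>R a0) = z + (real_of_int (k0 div int (l 0)) * real (l 0)) *\<^sub>R a0"
    using z(2) k0 by (simp add: algebra_simps)
  also have "\<dots> \<in> latZ m a" by (rule latZ_add[OF z(1) latZ_mult_a0])
  finally show ?thesis using \<open>s < l 0\<close> unfolding Ps_def by blast
qed

lemma Ps_uniq: assumes "Ps bj s" "Ps bj s'" shows "s = s'"
proof -
  have h1: "(bj - (bi + of_nat s *\<^sub>R a0)) - (bj - (bi + of_nat s' *\<^sub>R a0)) \<in> latZ m a"
    using latZ_diff[of "bj - (bi + of_nat s *\<^sub>R a0)" "bj - (bi + of_nat s' *\<^sub>R a0)"] assms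
    unfolding Ps_def by blast
  have h2: "(bj - (bi + of_nat s *\<^sub>R a0)) - (bj - (bi + of_nat s' *\<^sub>R a0))
      = of_int (int s' - int s) *\<^sub>R a0" by (simp add: algebra_simps)
  have "of_int (int s' - int s) *\<^sub>R a0 \<in> latZ m a" using h1 unfolding h2 .
  then have "int (l 0) dvd int s' - int s" by (rule order_a0)
  then have "int s' mod int (l 0) = int s mod int (l 0)" by (simp add: mod_eq_dvd_iff)
  then show ?thesis using assms unfolding Ps_def by simp
qed

lemma S0_prop: assumes "bj \<in> C" shows "Ps bj (S0 bj)"
proof -
  obtain s where s: "Ps bj s" using Ps_ex[OF assms] by blast
  have "S0 bj = s" unfolding s0_def
  proof (rule the_equality)
    show "s < l 0 \<and> bj - (bi + of_nat s *\<^sub>R a0) \<in> latZ m a" using s unfolding Ps_def .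
    fix x assume "x < l 0 \<and> bj - (bi + of_nat x *\<^sub>R a0) \<in> latZ m a"
    then have "Ps bj x" unfolding Ps_def .
    then show "x = s" using Ps_uniq s by blast
  qed
  then show ?thesis using s by simp
qed

lemma S0_eq: assumes "bj \<in> C" "Ps bj s" shows "S0 bj = s"
  using S0_prop[OF assms(1)] assms(2) Ps_uniq by blast

lemma S0_less: "bj \<in> C \<Longrightarrow> S0 bj < l 0" using S0_prop Ps_def by blast

lemma SV_prop: assumes "bj \<in> C"
  shows "(\<forall>r. r \<notin> {1..m} \<longrightarrow> SV bj r = 0) \<and>
      bi + of_nat (S0 bj) *\<^sub>R a0 = bj - (\<Sum>r=1..m. of_int (SV bj r) *\<^sub>R a r)"
proof -
  obtain k where k: "bj - (bi + of_nat (S0 bj) *\<^sub>R a0) = (\<Sum>j=1..m. of_int (k j) *\<^sub>R a j)"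
    using S0_prop[OF assms] unfolding Ps_def mem_latZ by blast
  define v where "v r = (if r \<in> {1..m} then k r else 0)" for r
  have sv: "(\<Sum>j=1..m. of_int (v j) *\<^sub>R a j) = (\<Sum>j=1..m. of_int (k j) *\<^sub>R a j)"
    by (rule sum.cong) (auto simp: v_def)
  define P where "P w \<longleftrightarrow> (\<forall>r. r \<notin> {1..m} \<longrightarrow> w r = 0) \<and>
      bi + of_nat (S0 bj) *\<^sub>R a0 = bj - (\<Sum>r=1..m. of_int (w r) *\<^sub>R a r)" for w :: "nat \<Rightarrow> int"
  have Pv: "P v" unfolding P_def using k sv by (auto simp: v_def algebra_simps)
  have "(THE w. P w) = v"
  proof (rule the_equality)
    show "P v" by (rule Pv)
    fix w assume w: "P w"
    show "w = v"
    proof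
      fix r show "w r = v r"
      proof (cases "r \<in> {1..m}")
        case True
        have "bj - (\<Sum>r=1..m. of_int (w r) *\<^sub>R a r) = bj - (\<Sum>r=1..m. of_int (v r) *\<^sub>R a r)"
          using w Pv unfolding P_def by simp
        then have "(\<Sum>r=1..m. of_int (w r) *\<^sub>R a r) = (\<Sum>r=1..m. of_int (v r) *\<^sub>R a r)"
          by (rule diff_left_imp_eq)
        from coord_unique[OF this True] show ?thesis by simp
      next
        case False then show ?thesis using w Pv unfolding P_def by simp
      qed
    qed
  qed
  then have "SV bj = v" unfolding svec_def P_def by simp
  then show ?thesis using Pv unfolding P_def by simp
qed

lemma combine_helper:
  assumes "x = (\<Sum>r=1..m. c r *\<^sub>R a r)" "y = x + t *\<^sub>R a0 + (\<Sum>r=1..m. w r *\<^sub>R a r)"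
  shows "y = (\<Sum>r=1..m. (c r + t * real (l r) / real (l 0) + w r) *\<^sub>R a r)"
proof -
  have e: "t *\<^sub>R a0 = (\<Sum>r=1..m. (t * real (l r) / real (l 0)) *\<^sub>R a r)"
    by (subst a0_eq) (simp add: scaleR_sum_right)
  show ?thesis unfolding assms(2) e assms(1)
    by (simp add: sum.distrib[symmetric] scaleR_add_left)
qed

lemma coords_rel:
  assumes "bj \<in> C" "r \<in> {1..m}"
  shows "coords m a bj r = coords m a bi r + real (S0 bj) * real (l r) / real (l 0) + of_int (SV bj r)"
proof -
  have bieq: "bi = (\<Sum>r=1..m. coords m a bi r *\<^sub>R a r)" using coords_prop[OF bi_span] by blast
  have eq: "bi + of_nat (S0 bj) *\<^sub>R a0 = bj - (\<Sum>r=1..m. of_int (SV bj r) *\<^sub>R a r)"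
    using SV_prop[OF assms(1)] by blast
  have "bj = bi + of_nat (S0 bj) *\<^sub>R a0 + (\<Sum>r=1..m. of_int (SV bj r) *\<^sub>R a r)"
    unfolding eq by simp
  from coords_eq[OF combine_helper[OF bieq this] assms(2)] show ?thesis .
qed

lemma para_coords:
  assumes "b \<in> parallelepiped m a" "r \<in> {1..m}"
  shows "0 \<le> coords m a b r \<and> coords m a b r < 1"
proof -
  obtain c where c: "b = (\<Sum>j=1..m. c j *\<^sub>R a j)" "\<forall>j\<in>{1..m}. 0 \<le> c j \<and> c j < 1"
    using assms(1) unfolding parallelepiped_def by blast
  show ?thesis using coords_eq[OF c(1) assms(2)] c(2) assms(2) by simp
qed

lemma S0_inj: assumes "bj \<in> Bk" "bk \<in> Bk" "S0 bj = S0 bk" shows "bj = bk"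
proof -
  have "(bj - (bi + of_nat (S0 bj) *\<^sub>R a0)) - (bk - (bi + of_nat (S0 bk) *\<^sub>R a0)) \<in> latZ m a"
    using latZ_diff[of "bj - (bi + of_nat (S0 bj) *\<^sub>R a0)" "bk - (bi + of_nat (S0 bk) *\<^sub>R a0)"]
      S0_prop[of bj] S0_prop[of bk] assms unfolding Ps_def by blast
  then have "bj - bk \<in> latZ m a" using assms(3) by simp
  then obtain k where k: "bj - bk = (\<Sum>j=1..m. of_int (k j) *\<^sub>R a j)" unfolding mem_latZ by blast
  have bkB: "bk \<in> Bset m a" "bj \<in> Bset m a" using assms by auto
  have bk: "bk = (\<Sum>r=1..m. coords m a bk r *\<^sub>R a r)"
    by (rule conjunct2[OF coords_prop[OF Bset_span[OF bkB(1)]]])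
  have bj: "bj = (\<Sum>r=1..m. coords m a bj r *\<^sub>R a r)"
    by (rule conjunct2[OF coords_prop[OF Bset_span[OF bkB(2)]]])
  have "bj = bk + (bj - bk)" by simp
  also have "\<dots> = (\<Sum>r=1..m. (coords m a bk r + of_int (k r)) *\<^sub>R a r)"
    unfolding k by (subst (1) bk) (simp add: scaleR_add_left sum.distrib)
  finally have bjk: "bj = (\<Sum>r=1..m. (coords m a bk r + of_int (k r)) *\<^sub>R a r)" .
  have cj: "coords m a bj r = coords m a bk r + of_int (k r)" if "r \<in> {1..m}" for r
    using coords_eq[OF bjk that] .
  have "coords m a bj r = coords m a bk r" if r: "r \<in> {1..m}" for r
  proof -
    have "0 \<le> coords m a bj r \<and> coords m a bj r < 1" "0 \<le> coords m a bk r \<and> coords m a bk r < 1"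
      using para_coords[OF Bset_para r] assms by auto
    then have "\<bar>real_of_int (k r)\<bar> < 1" using cj[OF r] by linarith
    then have "\<bar>k r\<bar> < 1" by linarith
    then have "k r = 0" by simp
    then show ?thesis using cj[OF r] by simp
  qed
  then have e: "(\<Sum>r=1..m. coords m a bj r *\<^sub>R a r) = (\<Sum>r=1..m. coords m a bk r *\<^sub>R a r)"
    by (intro sum.cong) auto
  have "bj = (\<Sum>r=1..m. coords m a bj r *\<^sub>R a r)" by (rule bj)
  also have "\<dots> = (\<Sum>r=1..m. coords m a bk r *\<^sub>R a r)" by (rule e)
  also have "\<dots> = bk" by (rule bk[symmetric])
  finally show ?thesis .
qed

lemma intvecs_add: "x \<in> intvecs \<Longrightarrow> y \<in> intvecs \<Longrightarrow> x + y \<in> intvecs"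
  unfolding intvecs_def by auto
lemma intvecs_diff: "x \<in> intvecs \<Longrightarrow> y \<in> intvecs \<Longrightarrow> x - y \<in> intvecs"
  unfolding intvecs_def by auto
lemma intvecs_scale: "x \<in> intvecs \<Longrightarrow> of_int k *\<^sub>R x \<in> intvecs"
  unfolding intvecs_def by auto
lemma intvecs_sum: "(\<And>j. j \<in> S \<Longrightarrow> f j \<in> intvecs) \<Longrightarrow> sum f S \<in> intvecs"
  unfolding intvecs_def by (auto simp: sum_component intro!: Ints_sum)

lemma S0_surj: assumes "s < l 0" shows "\<exists>bj\<in>Bk. S0 bj = s"
proof -
  define y where "y = bi + of_nat s *\<^sub>R a0"
  have yspan: "y \<in> span (a ` {1..m})" unfolding y_def
    using bi_span a0_span by (intro span_add span_scale) auto
  define c where "c = coords m a y"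
  define bj where "bj = (\<Sum>r=1..m. (c r - of_int \<lfloor>c r\<rfloor>) *\<^sub>R a r)"
  define w where "w = (\<Sum>r=1..m. of_int \<lfloor>c r\<rfloor> *\<^sub>R a r)"
  have yeq: "y = (\<Sum>r=1..m. c r *\<^sub>R a r)"
    unfolding c_def by (rule conjunct2[OF coords_prop[OF yspan]])
  have bj2: "bj = y - w"
    unfolding bj_def w_def yeq by (simp add: scaleR_diff_left sum_subtractf)
  have wZ: "w \<in> latZ m a" unfolding w_def mem_latZ by (rule exI[of _ "\<lambda>r. \<lfloor>c r\<rfloor>"]) simp
  have "bj \<in> parallelepiped m a" unfolding parallelepiped_def bj_def
    by (rule CollectI, rule exI[of _ "\<lambda>r. c r - of_int \<lfloor>c r\<rfloor>"])
       (auto simp: frac_lt_1[unfolded frac_def])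
  moreover have "bj \<in> span (a ` {1..m})" unfolding bj_def by (rule sum_in_span)
  moreover have "bj \<in> intvecs"
  proof -
    have "bi \<in> intvecs" using bi_in unfolding Bset_def VZ_def by auto
    moreover have "of_nat s *\<^sub>R a0 \<in> intvecs" using intvecs_scale[OF a0int, of "int s"] by simp
    moreover have "w \<in> intvecs" unfolding w_def using aint by (auto intro!: intvecs_sum intvecs_scale)
    ultimately show ?thesis unfolding bj2 y_def by (intro intvecs_diff intvecs_add)
  qed
  moreover have "bj \<in> C"
  proof -
    have "- w + of_int (int s) *\<^sub>R a0 \<in> latZplus m a a0" by (rule latZ_sub_plus[OF latZ_uminus[OF wZ]])
    from C_add[OF bi_C this] show ?thesis unfolding bj2 y_def by (simp add: algebra_simps)
  qed
  moreover have "Ps bj s" unfolding Ps_def using assms latZ_uminus[OF wZ] by (simp add: bj2 y_def)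
  ultimately have "bj \<in> Bk" "S0 bj = s" unfolding Bset_def VZ_def using S0_eq by auto
  then show ?thesis by blast
qed

lemma Bk_finite: "finite Bk"
proof (rule inj_on_finite[of S0 _ "{..<l 0}"])
  show "inj_on S0 Bk" by (rule inj_onI) (rule S0_inj)
  show "S0 ` Bk \<subseteq> {..<l 0}" using S0_less by auto
qed simp

end

lemma prod_mset_map_upt:
  "prod_mset (image_mset f (mset (map g [0..<k]))) = (\<Prod>\<sigma><k. f (g \<sigma>))"
  "prod_mset (image_mset f (image_mset g (mset_set {0..<k}))) = (\<Prod>\<sigma><k. f (g \<sigma>))"
proof -
  have e: "prod_mset (image_mset f (image_mset g (mset_set {0..<k}))) = (\<Prod>\<sigma><k. f (g \<sigma>))"
  proof -
    have "prod_mset (image_mset f (image_mset g (mset_set {0..<k})))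
        = prod_mset (image_mset (\<lambda>\<sigma>. f (g \<sigma>)) (mset_set {0..<k}))"
      by (simp add: multiset.map_comp comp_def)
    also have "\<dots> = (\<Prod>\<sigma>\<in>{0..<k}. f (g \<sigma>))" by (rule prod_unfold_prod_mset[symmetric])
    also have "\<dots> = (\<Prod>\<sigma><k. f (g \<sigma>))" by (simp add: atLeast0LessThan)
    finally show ?thesis .
  qed
  then show "prod_mset (image_mset f (image_mset g (mset_set {0..<k}))) = (\<Prod>\<sigma><k. f (g \<sigma>))" .
  show "prod_mset (image_mset f (mset (map g [0..<k]))) = (\<Prod>\<sigma><k. f (g \<sigma>))"
    using e by simp
qed

lemma prod_mset_sum_map:
  assumes "finite R"
  shows "prod_mset (image_mset f (\<Sum>r\<in>R. mset (map (g r) [0..<k r]))) = (\<Prod>r\<in>R. \<Prod>\<sigma><k r. f (g r \<sigma>))"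
  using assms
proof (induction R rule: finite_induct)
  case empty then show ?case by simp
next
  case (insert x F)
  then show ?case by (simp add: prod_mset_map_upt)
qed

context S6 begin

definition q0 :: "real^'n \<Rightarrow> real" where "q0 bj = real (S0 bj) / real (l 0)"
abbreviation "cf bj \<equiv> Fcoeff m a a0 l bi bj"
definition Hf :: "real^'n \<Rightarrow> real \<Rightarrow> complex" where
  "Hf bj q = (if \<exists>n::nat. q = q0 bj + real n then cf bj (nat \<lfloor>q - q0 bj\<rfloor>) else 0)"

definition Sset :: "real set" where "Sset = {1 - of_nat (S0 bj) / of_nat (l 0) | bj. bj \<in> Bk \<and> \<not> interior_pt m a bj}"
definition Tset :: "real set" where "Tset = {of_nat t / of_nat (l 0) | t::nat. t \<in> {1..l 0}}"
definition Lm :: "real multiset" where "Lm = (\<Sum>r\<in>{1..m}. mset (map (\<lambda>\<sigma>. (coords m a bi r + of_nat \<sigma>) / of_nat (l r)) [0..<l r]))"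
abbreviation "Be \<equiv> Beta m a a0 (l 0) Bk bi"
abbreviation "Al \<equiv> Alpha m a a0 l Bk bi"

lemma Be_eq: "Be = Tset - Sset" unfolding Beta_def Tset_def Sset_def by simp
lemma Al_eq: "Al = Lm - mset_set Sset" unfolding Alpha_def Lm_def Sset_def by simp

lemma H_at: "Hf bj (q0 bj + real n) = cf bj n"
  unfolding Hf_def by auto

lemma H_nz: "Hf bj q \<noteq> 0 \<Longrightarrow> \<exists>n::nat. q = q0 bj + real n"
  unfolding Hf_def by (auto split: if_splits)

lemma q0_range: "bj \<in> C \<Longrightarrow> 0 \<le> q0 bj \<and> q0 bj < 1"
  unfolding q0_def using S0_less l0pos by (auto simp: field_simps)

lemma q0_cls:
  assumes "bj \<in> Bk" "bk \<in> Bk" "q0 bj + real n = q0 bk + real n'"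
  shows "bj = bk \<and> n = n'"
proof -
  have "real (S0 bj + n * l 0) = real (S0 bk + n' * l 0)"
    using assms(3) l0pos unfolding q0_def by (simp add: field_simps)
  then have e: "S0 bj + n * l 0 = S0 bk + n' * l 0" by linarith
  have "S0 bj = (S0 bj + n * l 0) mod l 0" using S0_less assms(1) by simp
  also have "\<dots> = (S0 bk + n' * l 0) mod l 0" by (simp only: e)
  also have "\<dots> = S0 bk" using S0_less assms(2) by simp
  finally have "S0 bj = S0 bk" .
  then have "bj = bk" using S0_inj assms by blast
  then show ?thesis using e l0pos by simp
qed

lemma Tset_img: "Tset = (\<lambda>t. real t / real (l 0)) ` {1..l 0}"
  unfolding Tset_def by auto

lemma Tset_fin: "finite Tset" unfolding Tset_img by simp

lemma Tset_pos: "\<beta> \<in> Tset \<Longrightarrow> 0 < \<beta>"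
  unfolding Tset_img using l0pos by auto

lemma Sset_sub: "Sset \<subseteq> Tset"
proof
  fix \<gamma> assume "\<gamma> \<in> Sset"
  then obtain bj where bj: "bj \<in> Bk" "\<gamma> = 1 - real (S0 bj) / real (l 0)" unfolding Sset_def by auto
  have lt: "S0 bj < l 0" using S0_less bj by auto
  have "\<gamma> = real (l 0 - S0 bj) / real (l 0)" using bj(2) lt l0pos by (simp add: field_simps of_nat_diff)
  moreover have "l 0 - S0 bj \<in> {1..l 0}" using lt by auto
  ultimately show "\<gamma> \<in> Tset" unfolding Tset_img by blast
qed

lemma Sset_fin: "finite Sset" using Sset_sub Tset_fin finite_subset by blast
lemma Be_fin: "finite Be" unfolding Be_eq using Tset_fin by simp
lemma Be_pos: "\<beta> \<in> Be \<Longrightarrow> 0 < \<beta>" unfolding Be_eq using Tset_pos by auto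
lemma Sset_pos: "\<gamma> \<in> Sset \<Longrightarrow> 0 < \<gamma>" using Sset_sub Tset_pos by auto

lemma prodT:
  "(\<Prod>t\<in>{1..l 0}. f (real t / real (l 0))) = (\<Prod>\<beta>\<in>Be. f \<beta>) * (\<Prod>\<gamma>\<in>Sset. f \<gamma>)"
proof -
  have inj: "inj_on (\<lambda>t. real t / real (l 0)) {1..l 0}"
    using l0pos by (auto simp: inj_on_def field_simps)
  have "(\<Prod>t\<in>{1..l 0}. f (real t / real (l 0))) = (\<Prod>\<beta>\<in>Tset. f \<beta>)"
    unfolding Tset_img by (rule prod.reindex[OF inj, unfolded comp_def, symmetric])
  also have "Tset = Be \<union> Sset" unfolding Be_eq using Sset_sub by auto
  also have "(\<Prod>\<beta>\<in>Be \<union> Sset. f \<beta>) = (\<Prod>\<beta>\<in>Be. f \<beta>) * (\<Prod>\<gamma>\<in>Sset. f \<gamma>)"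
    by (rule prod.union_disjoint) (use Be_fin Sset_fin in \<open>auto simp: Be_eq\<close>)
  finally show ?thesis .
qed

lemma Sset_in_Lm: "Sset \<subseteq> set_mset Lm"
proof
  fix \<gamma> assume "\<gamma> \<in> Sset"
  then obtain bj where bj: "bj \<in> Bk" "\<not> interior_pt m a bj" "\<gamma> = 1 - real (S0 bj) / real (l 0)"
    unfolding Sset_def by auto
  obtain r where r: "r \<in> {1..m}" "\<not> coords m a bj r > 0" using bj(2) unfolding interior_pt_def by auto
  have "0 \<le> coords m a bj r" using para_coords[OF Bset_para r(1)] bj(1) by auto
  then have c0: "coords m a bj r = 0" using r(2) by simp
  define v where "v = coords m a bi r"
  have v: "0 < v" "v < 1" unfolding v_def using bi_int r(1) para_coords[OF Bset_para r(1)] bi_in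
    unfolding interior_pt_def by auto
  define u where "u = real (S0 bj) * real (l r) / real (l 0)"
  have lr: "l r > 0" using lrpos r(1) by simp
  have u: "0 \<le> u" "u < real (l r)" unfolding u_def using S0_less[of bj] bj(1) l0pos lr
    by (auto simp: field_simps)
  have rel: "0 = v + u + of_int (SV bj r)" using coords_rel[of bj r] bj(1) r(1) c0
    unfolding v_def u_def by simp
  define \<sigma> where "\<sigma> = int (l r) + SV bj r"
  have "- of_int (SV bj r) > (0::real)" "- of_int (SV bj r) < real (l r) + 1" using rel v u by linarith+
  then have s1: "0 \<le> \<sigma>" "\<sigma> < int (l r)" unfolding \<sigma>_def by linarith+
  have "(v + real (nat \<sigma>)) / real (l r) = (v + real (l r) + of_int (SV bj r)) / real (l r)"
    using s1 unfolding \<sigma>_def by simp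
  also have "\<dots> = (real (l r) - u) / real (l r)" using rel by (simp add: algebra_simps)
  also have "\<dots> = \<gamma>" unfolding bj(3) u_def using lr l0pos by (simp add: field_simps)
  finally have eq: "(coords m a bi r + real (nat \<sigma>)) / real (l r) = \<gamma>" unfolding v_def .
  have "nat \<sigma> \<in> set [0..<l r]" using s1 by auto
  then have "\<gamma> \<in> set_mset (mset (map (\<lambda>\<sigma>. (coords m a bi r + of_nat \<sigma>) / of_nat (l r)) [0..<l r]))"
    using eq by force
  then show "\<gamma> \<in> set_mset Lm" unfolding Lm_def using r(1) by (auto simp: set_mset_sum)
qed

lemma Sset_subm: "mset_set Sset \<subseteq># Lm"
proof (rule mset_subset_eqI)
  fix x show "count (mset_set Sset) x \<le> count Lm x"
    using Sset_in_Lm Sset_fin by (cases "x \<in> Sset") (auto simp: count_mset_set)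
qed

lemma prodL:
  "prod_mset (image_mset f Lm) = prod_mset (image_mset f Al) * (\<Prod>\<gamma>\<in>Sset. f \<gamma>)"
proof -
  have "Lm = Al + mset_set Sset" unfolding Al_eq using Sset_subm by simp
  then show ?thesis by (simp add: prod_unfold_prod_mset)
qed

end

context S6 begin

lemma cf0: "cf bj 0 = 1" unfolding Fcoeff_def by simp

lemma poch_nz: "0 < z \<Longrightarrow> pochhammer (complex_of_real z) k \<noteq> 0"
proof -
  assume "0 < z"
  then have "pochhammer z k > 0" by (rule pochhammer_pos)
  then show ?thesis by (simp add: pochhammer_of_real)
qed

lemma arg_eq:
  assumes "bj \<in> C" "r \<in> {1..m}"
  shows "(coords m a bj r - of_int (SV bj r) + real \<sigma>) / real (l r) = q0 bj + (coords m a bi r + real \<sigma>) / real (l r)"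
proof -
  have lr: "real (l r) > 0" using lrpos assms(2) by simp
  have e: "coords m a bj r - of_int (SV bj r) = coords m a bi r + real (S0 bj) * real (l r) / real (l 0)"
    using coords_rel[OF assms] by simp
  have "(coords m a bj r - of_int (SV bj r) + real \<sigma>) / real (l r)
      = (coords m a bi r + real (S0 bj) * real (l r) / real (l 0) + real \<sigma>) / real (l r)"
    by (simp only: e)
  also have "\<dots> = q0 bj + (coords m a bi r + real \<sigma>) / real (l r)"
    unfolding q0_def using lr l0pos by (simp add: field_simps)
  finally show ?thesis .
qed

lemma cf_rec:
  assumes bj: "bj \<in> C"
  shows "cf bj (Suc n) * (\<Prod>\<beta>\<in>Be. complex_of_real (q0 bj + real n + \<beta>))
       = cf bj n * prod_mset (image_mset (\<lambda>\<alpha>. complex_of_real (q0 bj + real n + \<alpha>)) Al)"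
proof -
  define y where "y = q0 bj + real n"
  have y0: "0 \<le> y" unfolding y_def using q0_range[OF bj] by simp
  define F where "F \<beta> = complex_of_real (y + \<beta>)" for \<beta>
  define A where "A r \<sigma> = complex_of_real ((coords m a bj r - of_int (SV bj r) + real \<sigma>) / real (l r))" for r \<sigma>
  define D where "D t = complex_of_real ((real (S0 bj) + real t) / real (l 0))" for t
  define Num where "Num k = (\<Prod>r=1..m. \<Prod>\<sigma><l r. pochhammer (A r \<sigma>) k)" for k
  define Den where "Den k = (\<Prod>t=1..l 0. pochhammer (D t) k)" for k
  have cfe: "cf bj k = Num k / Den k" for k unfolding Fcoeff_def Num_def Den_def A_def D_def by simp
  have Dpos: "(real (S0 bj) + real t) / real (l 0) > 0" if "t \<in> {1..l 0}" for t
    using that l0pos by (auto simp: field_simps)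
  have Den_nz: "Den k \<noteq> 0" for k
  proof -
    have "\<forall>t\<in>{1..l 0}. pochhammer (D t) k \<noteq> 0" unfolding D_def using poch_nz Dpos by blast
    then show ?thesis unfolding Den_def by (simp add: prod_zero_iff)
  qed
  have NumS: "Num (Suc n) = Num n * prod_mset (image_mset F Lm)"
  proof -
    have "Num (Suc n) = (\<Prod>r=1..m. \<Prod>\<sigma><l r. pochhammer (A r \<sigma>) n * (A r \<sigma> + of_nat n))"
      unfolding Num_def by (simp add: pochhammer_Suc)
    also have "\<dots> = Num n * (\<Prod>r=1..m. \<Prod>\<sigma><l r. (A r \<sigma> + of_nat n))"
      unfolding Num_def by (simp add: prod.distrib)
    also have "(\<Prod>r=1..m. \<Prod>\<sigma><l r. (A r \<sigma> + of_nat n)) =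
        (\<Prod>r\<in>{1..m}. \<Prod>\<sigma><l r. F ((coords m a bi r + of_nat \<sigma>) / of_nat (l r)))"
    proof (rule prod.cong[OF refl], rule prod.cong[OF refl])
      fix r \<sigma> assume r: "r \<in> {1..m}"
      show "A r \<sigma> + of_nat n = F ((coords m a bi r + of_nat \<sigma>) / of_nat (l r))"
        unfolding A_def F_def y_def arg_eq[OF bj r] by simp
    qed
    also have "\<dots> = prod_mset (image_mset F Lm)"
      unfolding Lm_def by (rule prod_mset_sum_map[symmetric]) simp
    finally show ?thesis .
  qed
  have DenS: "Den (Suc n) = Den n * (\<Prod>t\<in>{1..l 0}. F (real t / real (l 0)))"
  proof -
    have "Den (Suc n) = (\<Prod>t=1..l 0. pochhammer (D t) n * (D t + of_nat n))"
      unfolding Den_def by (simp add: pochhammer_Suc)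
    also have "\<dots> = Den n * (\<Prod>t=1..l 0. (D t + of_nat n))"
      unfolding Den_def by (simp add: prod.distrib)
    also have "(\<Prod>t=1..l 0. (D t + of_nat n)) = (\<Prod>t\<in>{1..l 0}. F (real t / real (l 0)))"
    proof (rule prod.cong[OF refl])
      fix t
      have "(real (S0 bj) + real t) / real (l 0) + real n = y + real t / real (l 0)"
        unfolding y_def q0_def using l0pos by (simp add: field_simps)
      then show "D t + of_nat n = F (real t / real (l 0))"
        unfolding D_def F_def by (metis of_real_add of_real_of_nat_eq)
    qed
    finally show ?thesis .
  qed
  have Fnz: "F \<beta> \<noteq> 0" if "0 < \<beta>" for \<beta>
  proof -
    have "y + \<beta> \<noteq> 0" using y0 that by simp
    then show ?thesis unfolding F_def by (metis of_real_eq_0_iff)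
  qed
  have Spnz: "(\<Prod>\<gamma>\<in>Sset. F \<gamma>) \<noteq> 0" using Fnz Sset_pos Sset_fin by (auto simp: prod_zero_iff)
  have Tnz: "(\<Prod>t\<in>{1..l 0}. F (real t / real (l 0))) \<noteq> 0"
    using Fnz l0pos by (auto simp: prod_zero_iff)
  have "cf bj (Suc n) * (\<Prod>t\<in>{1..l 0}. F (real t / real (l 0))) = cf bj n * prod_mset (image_mset F Lm)"
    unfolding cfe NumS DenS using Den_nz[of n] Tnz by (simp add: field_simps)
  then have "cf bj (Suc n) * (\<Prod>\<beta>\<in>Be. F \<beta>) * (\<Prod>\<gamma>\<in>Sset. F \<gamma>) =
      cf bj n * prod_mset (image_mset F Al) * (\<Prod>\<gamma>\<in>Sset. F \<gamma>)"
    unfolding prodT prodL by (simp add: mult.assoc)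
  then have "cf bj (Suc n) * (\<Prod>\<beta>\<in>Be. F \<beta>) = cf bj n * prod_mset (image_mset F Al)"
    using Spnz by simp
  then show ?thesis unfolding F_def y_def .
qed

end

lemma fps_compose_Xpow_nth:
  fixes f :: "'a::comm_ring_1 fps"
  assumes "k > 0"
  shows "fps_nth (f oo fps_X ^ k) n = (if k dvd n then fps_nth f (n div k) else 0)"
proof -
  have "fps_nth (f oo fps_X ^ k) n = (\<Sum>i\<in>{0..n}. if i = n div k \<and> k dvd n then fps_nth f i else 0)"
    unfolding fps_compose_nth power_mult[symmetric] fps_X_power_nth
    apply (rule sum.cong[OF refl])
    using assms by auto
  also have "\<dots> = (if k dvd n then fps_nth f (n div k) else 0)"
    using assms by (auto simp: sum.delta' div_le_dividend)
  finally show ?thesis .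
qed


context S6 begin

abbreviation "Iset \<equiv> {b \<in> Bk. interior_pt m a b}"

lemma Iset_fin: "finite Iset" by (rule finite_subset[OF _ Bk_finite]) auto

lemma root_Be: assumes "bj \<in> Bk" "interior_pt m a bj" shows "1 - q0 bj \<in> Be"
proof -
  have lt: "S0 bj < l 0" using S0_less assms by auto
  have "1 - q0 bj = real (l 0 - S0 bj) / real (l 0)" unfolding q0_def using lt l0pos
    by (simp add: field_simps of_nat_diff)
  moreover have "l 0 - S0 bj \<in> {1..l 0}" using lt by auto
  ultimately have T: "1 - q0 bj \<in> Tset" unfolding Tset_img by blast
  have "1 - q0 bj \<notin> Sset"
  proof
    assume "1 - q0 bj \<in> Sset"
    then obtain bk where bk: "bk \<in> Bk" "\<not> interior_pt m a bk" "1 - q0 bj = 1 - real (S0 bk) / real (l 0)"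
      unfolding Sset_def by auto
    have "q0 bj + real 0 = q0 bk + real 0" using bk(3) unfolding q0_def by simp
    then have "bj = bk" using q0_cls assms(1) bk(1) by blast
    then show False using bk(2) assms(2) by simp
  qed
  then show ?thesis using T unfolding Be_eq by simp
qed

lemma P_nz: "0 \<le> y \<Longrightarrow> (\<Prod>\<beta>\<in>Be. complex_of_real (y + \<beta>)) \<noteq> 0"
proof -
  assume y: "0 \<le> y"
  have "\<forall>\<beta>\<in>Be. complex_of_real (y + \<beta>) \<noteq> 0"
  proof
    fix \<beta> assume "\<beta> \<in> Be"
    then have "y + \<beta> \<noteq> 0" using Be_pos y by fastforce
    then show "complex_of_real (y + \<beta>) \<noteq> 0" by (metis of_real_eq_0_iff)
  qed
  then show ?thesis using Be_fin by (simp add: prod_zero_iff)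
qed

lemma hyp_shift:
  "hyp_op Be Al h (y + 1) = (\<Prod>\<beta>\<in>Be. complex_of_real (y + \<beta>)) * h (y + 1)
     - prod_mset (image_mset (\<lambda>\<alpha>. complex_of_real (y + \<alpha>)) Al) * h y"
proof -
  have e1: "(\<lambda>\<beta>. complex_of_real (y + 1 + \<beta> - 1)) = (\<lambda>\<beta>. complex_of_real (y + \<beta>))" by (rule ext) simp
  have e2: "(\<lambda>\<alpha>. complex_of_real (y + 1 - 1 + \<alpha>)) = (\<lambda>\<alpha>. complex_of_real (y + \<alpha>))" by (rule ext) simp
  show ?thesis unfolding hyp_op_def e1 e2 by simp
qed

lemma Hf_other:
  assumes "bj \<in> Bk" "bk \<in> Bk" "bk \<noteq> bj"
  shows "Hf bk (q0 bj + real n) = 0"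
proof (rule ccontr)
  assume "Hf bk (q0 bj + real n) \<noteq> 0"
  then obtain n' where "q0 bj + real n = q0 bk + real n'" using H_nz by blast
  then show False using q0_cls assms by blast
qed

lemma sol:
  assumes bj: "bj \<in> Bk" "interior_pt m a bj"
  shows "hyp_op Be Al (Hf bj) q = 0"
proof -
  have bjC: "bj \<in> C" using bj by simp
  consider (A) n where "q = q0 bj + real (Suc n)" | (B) "q = q0 bj"
    | (C) "\<not> (\<exists>n. q = q0 bj + real n)" "\<not> (\<exists>n. q - 1 = q0 bj + real n)"
  proof (cases "\<exists>n. q = q0 bj + real n")
    case True
    then obtain n where n: "q = q0 bj + real n" by blast
    show ?thesis
    proof (cases n)
      case 0 then show ?thesis using n that(2) by simp
    next
      case (Suc k) then show ?thesis using n that(1) by blast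
    qed
  next
    case False
    show ?thesis
    proof (cases "\<exists>n. q - 1 = q0 bj + real n")
      case True
      then obtain n where "q - 1 = q0 bj + real n" by blast
      then have "q = q0 bj + real (Suc n)" by simp
      then show ?thesis using that(1) by blast
    next
      case F2: False
      show ?thesis using that(3) False F2 by blast
    qed
  qed
  then show ?thesis
  proof cases
    case (A n)
    have q: "q = (q0 bj + real n) + 1" using A by simp
    have e: "(q0 bj + real n) + 1 = q0 bj + real (Suc n)" by simp
    have h1: "Hf bj ((q0 bj + real n) + 1) = cf bj (Suc n)"
      unfolding e by (rule H_at)
    have h0: "Hf bj (q0 bj + real n) = cf bj n" by (rule H_at)
    show ?thesis unfolding q hyp_shift h1 h0 using cf_rec[OF bjC, of n] by (simp add: mult.commute)
  next
    case B
    have h0: "Hf bj q = 1" using H_at[of bj 0] cf0 B by simp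
    have h1: "Hf bj (q - 1) = 0"
    proof (rule ccontr)
      assume "Hf bj (q - 1) \<noteq> 0"
      then obtain n where "q - 1 = q0 bj + real n" using H_nz by blast
      then show False using B by simp
    qed
    have "(\<Prod>\<beta>\<in>Be. complex_of_real (q + \<beta> - 1)) = 0"
      using root_Be[OF bj] Be_fin B by (auto simp: prod_zero_iff intro!: bexI[of _ "1 - q0 bj"])
    then show ?thesis unfolding hyp_op_def h0 h1 by simp
  next
    case C
    have "Hf bj q = 0" "Hf bj (q - 1) = 0" using C H_nz by blast+
    then show ?thesis unfolding hyp_op_def by simp
  qed
qed

lemma fps_part:
  assumes "bj \<in> Bk"
  shows "fps_nth (Fseries m a a0 l bi bj) N = Hf bj (real N / real (l 0))"
proof -
  have lt: "S0 bj < l 0" using S0_less assms by auto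
  have F: "fps_nth (Fseries m a a0 l bi bj) N =
      (if N < S0 bj then 0 else if l 0 dvd (N - S0 bj) then cf bj ((N - S0 bj) div l 0) else 0)"
    unfolding Fseries_def fps_X_power_mult_nth fps_compose_Xpow_nth[OF l0pos] by simp
  have iff: "real N / real (l 0) = q0 bj + real n \<longleftrightarrow> N = S0 bj + n * l 0" for n
  proof -
    have "real N / real (l 0) = q0 bj + real n \<longleftrightarrow> real N = real (S0 bj + n * l 0)"
      unfolding q0_def using l0pos by (simp add: field_simps)
    also have "\<dots> \<longleftrightarrow> N = S0 bj + n * l 0" by (rule of_nat_eq_iff)
    finally show ?thesis .
  qed
  show ?thesis
  proof (cases "\<not> N < S0 bj \<and> l 0 dvd (N - S0 bj)")
    case True
    define n where "n = (N - S0 bj) div l 0"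
    have N: "N = S0 bj + n * l 0" using True unfolding n_def by auto
    then have "real N / real (l 0) = q0 bj + real n" using iff by blast
    then show ?thesis using F True H_at unfolding n_def by simp
  next
    case False
    have "Hf bj (real N / real (l 0)) = 0"
    proof (rule ccontr)
      assume "Hf bj (real N / real (l 0)) \<noteq> 0"
      then obtain n where "real N / real (l 0) = q0 bj + real n" using H_nz by blast
      then have "N = S0 bj + n * l 0" using iff by blast
      then show False using False by simp
    qed
    then show ?thesis using F False by auto
  qed
qed

lemma indep_part:
  assumes "\<forall>q. (\<Sum>bj\<in>Iset. d bj * Hf bj q) = 0" "bj \<in> Iset"
  shows "d bj = 0"
proof -
  have "0 = (\<Sum>bk\<in>Iset. d bk * Hf bk (q0 bj + real 0))" using assms(1) by simp
  also have "\<dots> = d bj * Hf bj (q0 bj + real 0) + (\<Sum>bk\<in>Iset - {bj}. d bk * Hf bk (q0 bj + real 0))"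
    by (rule sum.remove[OF Iset_fin assms(2)])
  also have "(\<Sum>bk\<in>Iset - {bj}. d bk * Hf bk (q0 bj + real 0)) = 0"
  proof (rule sum.neutral, rule ballI)
    fix x assume "x \<in> Iset - {bj}"
    then show "d x * Hf x (q0 bj + real 0) = 0" using Hf_other[of bj x 0] assms(2) by simp
  qed
  also have "Hf bj (q0 bj + real 0) = 1" using H_at[of bj 0] cf0 by simp
  finally show ?thesis by simp
qed

end

context S6 begin

lemma compl_class:
  assumes hyp: "\<forall>q. hyp_op Be Al h q = 0" and bj: "bj \<in> Bk"
  shows "h (q0 bj + real n) = h (q0 bj) * cf bj n"
proof (induction n)
  case 0 then show ?case using cf0 by simp
next
  case (Suc n)
  define y where "y = q0 bj + real n"
  have y0: "0 \<le> y" unfolding y_def using q0_range[of bj] bj by simp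
  define P where "P = (\<Prod>\<beta>\<in>Be. complex_of_real (y + \<beta>))"
  define Q where "Q = prod_mset (image_mset (\<lambda>\<alpha>. complex_of_real (y + \<alpha>)) Al)"
  have e: "q0 bj + real (Suc n) = y + 1" unfolding y_def by simp
  have "P * h (y + 1) - Q * h y = 0" using hyp[rule_format, of "y + 1"] unfolding hyp_shift P_def Q_def .
  then have "P * h (y + 1) = Q * h y" by simp
  also have "h y = h (q0 bj) * cf bj n" using Suc unfolding y_def .
  also have "Q * (h (q0 bj) * cf bj n) = h (q0 bj) * (cf bj n * Q)" by simp
  also have "cf bj n * Q = cf bj (Suc n) * P" using cf_rec[of bj n] bj unfolding P_def Q_def y_def by simp
  finally have "P * h (y + 1) = P * (h (q0 bj) * cf bj (Suc n))" by (simp add: ac_simps)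
  moreover have "P \<noteq> 0" unfolding P_def by (rule P_nz[OF y0])
  ultimately show ?case unfolding e by simp
qed

lemma compl_supp:
  assumes gs: "gen_series h" and hyp: "\<forall>q. hyp_op Be Al h q = 0" and hq: "h q \<noteq> 0"
  shows "\<exists>bj\<in>Iset. \<exists>n::nat. q = q0 bj + real n"
proof -
  obtain \<Gamma> where \<Gamma>: "finite \<Gamma>" "\<forall>q. h q \<noteq> 0 \<longrightarrow> (\<exists>\<gamma>\<in>\<Gamma>. \<exists>n::nat. q = \<gamma> + of_nat n)"
    using gs unfolding gen_series_def by blast
  define N where "N = {n::nat. h (q - real n) \<noteq> 0}"
  have sub: "N \<subseteq> (\<Union>\<gamma>\<in>\<Gamma>. {..nat \<lfloor>q - \<gamma>\<rfloor>})"
  proof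
    fix n assume "n \<in> N"
    then have "h (q - real n) \<noteq> 0" unfolding N_def by simp
    then obtain \<gamma> k where g: "\<gamma> \<in> \<Gamma>" "q - real n = \<gamma> + real k" using \<Gamma>(2) by blast
    then have "real n \<le> q - \<gamma>" by simp
    then have "n \<le> nat \<lfloor>q - \<gamma>\<rfloor>" by (simp add: le_nat_iff le_floor_iff)
    then show "n \<in> (\<Union>\<gamma>\<in>\<Gamma>. {..nat \<lfloor>q - \<gamma>\<rfloor>})" using g(1) by blast
  qed
  have finN: "finite N" by (rule finite_subset[OF sub]) (use \<Gamma>(1) in simp)
  have "0 \<in> N" unfolding N_def using hq by simp
  define n where "n = Max N"
  have nN: "n \<in> N" unfolding n_def using finN \<open>0 \<in> N\<close> by (intro Max_in) auto
  have "Suc n \<notin> N"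
  proof
    assume "Suc n \<in> N"
    from Max_ge[OF finN this] show False unfolding n_def[symmetric] by simp
  qed
  define qs where "qs = q - real n"
  have h1: "h qs \<noteq> 0" using nN unfolding N_def qs_def by simp
  have e: "qs - 1 = q - real (Suc n)" unfolding qs_def by simp
  have "h (q - real (Suc n)) = 0" using \<open>Suc n \<notin> N\<close> unfolding N_def by blast
  then have h2: "h (qs - 1) = 0" unfolding e .
  have "(\<Prod>\<beta>\<in>Be. complex_of_real (qs + \<beta> - 1)) * h qs = 0"
    using hyp[rule_format, of qs] h2 unfolding hyp_op_def by simp
  then have "(\<Prod>\<beta>\<in>Be. complex_of_real (qs + \<beta> - 1)) = 0" using h1 by simp
  then obtain \<beta> where \<beta>: "\<beta> \<in> Be" "complex_of_real (qs + \<beta> - 1) = 0"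
    using Be_fin by (auto simp: prod_zero_iff)
  then have "qs + \<beta> - 1 = 0" by (metis of_real_eq_0_iff)
  then have qs: "qs = 1 - \<beta>" by linarith
  have "\<beta> \<in> Tset" "\<beta> \<notin> Sset" using \<beta>(1) unfolding Be_eq by auto
  then obtain t where t: "t \<in> {1..l 0}" "\<beta> = real t / real (l 0)" unfolding Tset_img by auto
  have "l 0 - t < l 0" using t(1) by auto
  then obtain bj where bj: "bj \<in> Bk" "S0 bj = l 0 - t" using S0_surj by blast
  have q0e: "q0 bj = 1 - \<beta>" unfolding q0_def bj(2) t(2) using t(1) l0pos
    by (simp add: of_nat_diff field_simps)
  have "interior_pt m a bj"
  proof (rule ccontr)
    assume "\<not> interior_pt m a bj"
    then have "1 - real (S0 bj) / real (l 0) \<in> Sset" unfolding Sset_def using bj(1) by blast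
    moreover have "1 - real (S0 bj) / real (l 0) = \<beta>" using q0e unfolding q0_def by simp
    ultimately show False using \<open>\<beta> \<notin> Sset\<close> by simp
  qed
  moreover have "q = q0 bj + real n" using qs q0e unfolding qs_def by simp
  ultimately show ?thesis using bj(1) by blast
qed

lemma compl_part:
  assumes gs: "gen_series h" and hyp: "\<forall>q. hyp_op Be Al h q = 0"
  shows "\<forall>q. h q = (\<Sum>bj\<in>Iset. h (q0 bj) * Hf bj q)"
proof
  fix q
  show "h q = (\<Sum>bj\<in>Iset. h (q0 bj) * Hf bj q)"
  proof (cases "\<exists>bj\<in>Iset. \<exists>n::nat. q = q0 bj + real n")
    case True
    then obtain bj n where bj: "bj \<in> Iset" and q: "q = q0 bj + real n" by blast
    have "(\<Sum>bk\<in>Iset. h (q0 bk) * Hf bk q) = h (q0 bj) * Hf bj q + (\<Sum>bk\<in>Iset - {bj}. h (q0 bk) * Hf bk q)"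
      by (rule sum.remove[OF Iset_fin bj])
    also have "(\<Sum>bk\<in>Iset - {bj}. h (q0 bk) * Hf bk q) = 0"
    proof (rule sum.neutral, rule ballI)
      fix x assume "x \<in> Iset - {bj}"
      then show "h (q0 x) * Hf x q = 0" using Hf_other[of bj x n] bj unfolding q by simp
    qed
    also have "Hf bj q = cf bj n" unfolding q by (rule H_at)
    finally show ?thesis using compl_class[OF hyp, of bj n] bj q by simp
  next
    case False
    then have "h q = 0" using compl_supp[OF gs hyp] by blast
    moreover have "(\<Sum>bj\<in>Iset. h (q0 bj) * Hf bj q) = 0"
    proof (rule sum.neutral, rule ballI)
      fix x assume x: "x \<in> Iset"
      have "Hf x q = 0" using H_nz[of x q] False x by blast
      then show "h (q0 x) * Hf x q = 0" by simp
    qed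
    ultimately show ?thesis by simp
  qed
qed

lemma main:
  shows "\<exists>H :: real^'n \<Rightarrow> real \<Rightarrow> complex.
     (\<forall>bj\<in>{b\<in>Bset m a \<inter> C. interior_pt m a b}.
        (\<forall>q. H bj q \<noteq> 0 \<longrightarrow>
           (\<exists>n::nat. q = of_nat (s0 m a a0 (l 0) bi bj) / of_nat (l 0) + of_nat n))
      \<and> (\<forall>q. hyp_op (Beta m a a0 (l 0) (Bset m a \<inter> C) bi) (Alpha m a a0 l (Bset m a \<inter> C) bi) (H bj) q = 0)
      \<and> (\<forall>N. fps_nth (Fseries m a a0 l bi bj) N = H bj (of_nat N / of_nat (l 0))))
   \<and> (\<forall>d. (\<forall>q. (\<Sum>bj\<in>{b\<in>Bset m a \<inter> C. interior_pt m a b}. d bj * H bj q) = 0) \<longrightarrow>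
          (\<forall>bj\<in>{b\<in>Bset m a \<inter> C. interior_pt m a b}. d bj = 0))
   \<and> (\<forall>h. gen_series h \<and>
          (\<forall>q. hyp_op (Beta m a a0 (l 0) (Bset m a \<inter> C) bi) (Alpha m a a0 l (Bset m a \<inter> C) bi) h q = 0) \<longrightarrow>
          (\<exists>d. \<forall>q. h q = (\<Sum>bj\<in>{b\<in>Bset m a \<inter> C. interior_pt m a b}. d bj * H bj q)))"
proof (rule exI[of _ Hf], intro conjI ballI allI impI)
  fix bj q assume bj: "bj \<in> Iset" and "Hf bj q \<noteq> 0"
  then show "\<exists>n::nat. q = of_nat (S0 bj) / of_nat (l 0) + of_nat n"
    using H_nz unfolding q0_def by simp
next
  fix bj q assume bj: "bj \<in> Iset"
  then show "hyp_op Be Al (Hf bj) q = 0" using sol by blast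
next
  fix bj N assume bj: "bj \<in> Iset"
  then show "fps_nth (Fseries m a a0 l bi bj) N = Hf bj (of_nat N / of_nat (l 0))"
    using fps_part by simp
next
  fix d bj assume "\<forall>q. (\<Sum>bj\<in>Iset. d bj * Hf bj q) = 0" "bj \<in> Iset"
  then show "d bj = 0" by (rule indep_part)
next
  fix h assume "gen_series h \<and> (\<forall>q. hyp_op Be Al h q = 0)"
  then have "\<forall>q. h q = (\<Sum>bj\<in>Iset. h (q0 bj) * Hf bj q)" using compl_part by blast
  then show "\<exists>d. \<forall>q. h q = (\<Sum>bj\<in>Iset. d bj * Hf bj q)" by (rule exI[of _ "\<lambda>bj. h (q0 bj)"])
qed

end

theorem theorem6p17:
  fixes a :: "nat \<Rightarrow> real^'n" and a0 :: "real^'n" and l :: "nat \<Rightarrow> nat" and m :: nat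
    and C :: "(real^'n) set" and bi :: "real^'n"
  assumes "\<forall>j\<in>{1..m}. a j \<in> intvecs" and "a0 \<in> intvecs"
    and "inj_on a {1..m}" and "independent (a ` {1..m})"
    and "\<forall>j\<le>m. l j > 0" and "Gcd (l ` {0..m}) = 1"
    and "of_nat (l 0) *\<^sub>R a0 = (\<Sum>j=1..m. of_nat (l j) *\<^sub>R a j)"
    and "l 0 = (\<Sum>j=1..m. l j)"
    and "is_coset m a a0 C"
    and "bi \<in> Bset m a \<inter> C" and "interior_pt m a bi"
  shows "\<exists>H :: real^'n \<Rightarrow> real \<Rightarrow> complex.
     (\<forall>bj\<in>{b\<in>Bset m a \<inter> C. interior_pt m a b}.
        (\<forall>q. H bj q \<noteq> 0 \<longrightarrow>
           (\<exists>n::nat. q = of_nat (s0 m a a0 (l 0) bi bj) / of_nat (l 0) + of_nat n))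
      \<and> (\<forall>q. hyp_op (Beta m a a0 (l 0) (Bset m a \<inter> C) bi) (Alpha m a a0 l (Bset m a \<inter> C) bi) (H bj) q = 0)
      \<and> (\<forall>N. fps_nth (Fseries m a a0 l bi bj) N = H bj (of_nat N / of_nat (l 0))))
   \<and> (\<forall>d. (\<forall>q. (\<Sum>bj\<in>{b\<in>Bset m a \<inter> C. interior_pt m a b}. d bj * H bj q) = 0) \<longrightarrow>
          (\<forall>bj\<in>{b\<in>Bset m a \<inter> C. interior_pt m a b}. d bj = 0))
   \<and> (\<forall>h. gen_series h \<and>
          (\<forall>q. hyp_op (Beta m a a0 (l 0) (Bset m a \<inter> C) bi) (Alpha m a a0 l (Bset m a \<inter> C) bi) h q = 0) \<longrightarrow>
          (\<exists>d. \<forall>q. h q = (\<Sum>bj\<in>{b\<in>Bset m a \<inter> C. interior_pt m a b}. d bj * H bj q)))"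
proof -
  interpret S6 a a0 l m C bi
    by (unfold_locales; fact assms)
  show ?thesis by (rule main)
qed

end
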